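(* For every base $b\ge 2$ there exist infinitely many $b$-wARH numbers that are not $b$-MRH numbers.
   Context: Fix a base $b\ge 2$. $s_b(N)$ is the sum of the base-$b$ digits of $N$. For a positive integer $X$, its reversal $X^R$ is the integer whose base-$b$ representation is that of $X$ written in reverse order (leading zeros of the result are dropped). A positive integer $N$ is a $b$-wARH number if there exists an integer $A\ge 0$ such that $N=(A+s_b(N))+(A+s_b(N))^R$. A positive integer $N$ is a $b$-MRH number if there exists a positive integer $M$ (a multiplicative multiplier) such that $N=(M s_b(N))\cdot (M s_b(N))^R$. *)

theory Defs
  imports Main
begin

fun digits :: "nat \<Rightarrow> nat \<Rightarrow> nat list" where
  "digits b n = (if b < 2 \<or> n = 0 then [] else n mod b # digits b (n div b))"

fun from_digits :: "nat \<Rightarrow> nat list \<Rightarrow> nat" where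
  "from_digits b [] = 0"
| "from_digits b (d # ds) = d + b * from_digits b ds"

definition digit_sum :: "nat \<Rightarrow> nat \<Rightarrow> nat" where
  "digit_sum b n = sum_list (digits b n)"

text \<open>Reversal: the number whose base-b representation is that of n reversed
  (leading zeros of the result dropped automatically by evaluation).\<close>
definition rev_num :: "nat \<Rightarrow> nat \<Rightarrow> nat" where
  "rev_num b n = from_digits b (rev (digits b n))"

definition wARH :: "nat \<Rightarrow> nat \<Rightarrow> bool" where
  "wARH b N \<longleftrightarrow> N > 0 \<and> (\<exists>A::nat. N = (A + digit_sum b N) + rev_num b (A + digit_sum b N))"

definition MRH :: "nat \<Rightarrow> nat \<Rightarrow> bool" where
  "MRH b N \<longleftrightarrow> N > 0 \<and> (\<exists>M::nat. M > 0 \<and> N = (M * digit_sum b N) * rev_num b (M * digit_sum b N))"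

end

theory Submission
  imports Defs
begin

declare digits.simps [simp del]

lemma digits_0 [simp]: "digits b 0 = []"
  by (subst digits.simps) simp

lemma digits_step:
  assumes "b \<ge> 2" "r < b" "b*q + r > 0"
  shows "digits b (b*q + r) = r # digits b q"
proof -
  have "(b*q+r) mod b = r" using assms by simp
  moreover have "(b*q+r) div b = q" using assms by simp
  ultimately show ?thesis using assms by (subst digits.simps) simp
qed

lemma digits_pow: "b \<ge> 2 \<Longrightarrow> digits b (b^m) = replicate m 0 @ [1]"
proof (induction m)
  case 0
  then show ?case
    using digits_step[of b 1 0] by simp
next
  case (Suc m)
  have "digits b (b^Suc m) = digits b (b*b^m + 0)" by simp
  also have "\<dots> = 0 # digits b (b^m)" using Suc.prems by (intro digits_step) auto
  finally show ?case using Suc by simp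
qed

lemma from_digits_rep0: "from_digits b (replicate m 0) = 0"
  by (induction m) auto

lemma from_digits_digits: "b \<ge> 2 \<Longrightarrow> from_digits b (digits b n) = n"
proof (induction b n rule: digits.induct)
  case (1 b n)
  then show ?case
    by (subst digits.simps) auto
qed

lemma from_digits_mod2: "odd b \<Longrightarrow> from_digits b ds mod 2 = sum_list ds mod 2"
proof (induction ds)
  case Nil then show ?case by simp
next
  case (Cons d ds)
  have "from_digits b (d # ds) mod 2 = (d + b * from_digits b ds) mod 2" by simp
  also have "\<dots> = (d + from_digits b ds) mod 2"
  proof -
    obtain c where c: "b = 2*c+1" using Cons.prems oddE by blast
    have eq: "d + b * from_digits b ds = (d + from_digits b ds) + 2*(c*from_digits b ds)"
      unfolding c by (simp add: algebra_simps)
    show ?thesis by (subst eq) (rule mod_mult_self2)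
  qed
  also have "\<dots> = (d + sum_list ds) mod 2" using Cons.IH Cons.prems
    by (metis mod_add_right_eq)
  finally show ?case by simp
qed

lemma rev_mod2:
  assumes "b \<ge> 2" "odd b"
  shows "rev_num b n mod 2 = n mod 2"
proof -
  have "rev_num b n mod 2 = sum_list (rev (digits b n)) mod 2"
    unfolding rev_num_def using from_digits_mod2[OF assms(2)] by blast
  also have "\<dots> = sum_list (digits b n) mod 2" by simp
  also have "\<dots> = from_digits b (digits b n) mod 2" using from_digits_mod2[OF assms(2)] by simp
  also have "\<dots> = n mod 2" using from_digits_digits[OF assms(1)] by simp
  finally show ?thesis .
qed

lemma key:
  assumes b: "b \<ge> 2" and k: "k \<ge> 1"
  shows "wARH b (b^(2*k) + 1) \<and> \<not> MRH b (b^(2*k) + 1)"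
proof -
  define m where "m = 2*k - 1"
  have m2: "2*k = Suc m" using k unfolding m_def by simp
  have "b^(2*k) + 1 = b * b^m + 1" using m2 by simp
  hence dN: "digits b (b^(2*k) + 1) = 1 # replicate m 0 @ [1]"
    using digits_step[of b 1 "b^m"] digits_pow[OF b, of m] b by simp
  hence s: "digit_sum b (b^(2*k) + 1) = 2" unfolding digit_sum_def by simp
  have rv: "rev_num b (b^(2*k)) = 1"
    unfolding rev_num_def using digits_pow[OF b, of "2*k"] from_digits_rep0[of b "2*k"] by simp
  have ge: "b^(2*k) \<ge> 2"
    proof -
    have "b^(2*k) \<ge> b^1" using b k by (intro power_increasing) auto
    thus ?thesis using b by simp
  qed
  have e: "b^(2*k) - 2 + 2 = b^(2*k)" using ge by simp
  have "b^(2*k) + 1 = (b^(2*k) - 2 + 2) + rev_num b (b^(2*k) - 2 + 2)"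
    unfolding e rv by simp
  hence W: "wARH b (b^(2*k) + 1)"
    unfolding wARH_def s by (intro conjI exI[of _ "b^(2*k) - 2"]) simp_all
  have NM: "\<not> MRH b (b^(2*k) + 1)"
  proof
    assume "MRH b (b^(2*k) + 1)"
    then obtain M where eq: "b^(2*k) + 1 = (M*2) * rev_num b (M*2)"
      unfolding MRH_def s by blast
    show False
    proof (cases "even b")
      case True
      then have "odd (b^(2*k) + 1)" using k by simp
      with eq show False by simp
    next
      case False
      have "rev_num b (M*2) mod 2 = 0" using rev_mod2[OF b False, of "M*2"] by simp
      then obtain t where t: "rev_num b (M*2) = 2*t" by auto
      have "(M*2)*(2*t) = 4*(M*t)" by simp
      with eq t have "b^(2*k) + 1 = 4*(M*t)" by metis
      hence "(b^(2*k) + 1) mod 4 = (4*(M*t)) mod 4" by (rule arg_cong)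
      moreover have "(4*(M*t)) mod 4 = (0::nat)" by simp
      ultimately have "(b^(2*k) + 1) mod 4 = 0" by simp
      moreover have h1: "b^(2*k) mod 4 = 1"
      proof -
        obtain c where "b = 2*c+1" using False oddE by blast
        hence "b^2 = 4*(c*c+c) + 1" by (simp add: power2_eq_square algebra_simps)
        hence "b^2 mod 4 = 1" by simp
        moreover have "(b^2)^k mod 4 = ((b^2) mod 4)^k mod 4" by (rule power_mod[symmetric])
        ultimately have "(b^2)^k mod 4 = 1" by simp
        thus ?thesis by (simp add: power_mult)
      qed
      moreover have "(b^(2*k)+1) mod 4 = (b^(2*k) mod 4 + 1) mod 4" by (rule mod_add_left_eq[symmetric])
      ultimately show False by simp
    qed
  qed
  show ?thesis using W NM by blast
qed

theorem proposition10:
  fixes b :: nat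
  assumes "b \<ge> 2"
  shows "infinite {N::nat. wARH b N \<and> \<not> MRH b N}"
proof
  assume "finite {N::nat. wARH b N \<and> \<not> MRH b N}"
  then obtain n where n: "\<forall>N\<in>{N::nat. wARH b N \<and> \<not> MRH b N}. N < n"
    using finite_nat_set_iff_bounded by blast
  have a: "n < 2^(2*Suc n)" proof -
    have "n < 2^n" by (rule less_exp)
    also have "(2::nat)^n \<le> 2^(2*Suc n)" by (intro power_increasing) auto
    finally show ?thesis .
  qed
  have c: "(2::nat)^(2*Suc n) \<le> b^(2*Suc n)" by (rule power_mono) (use assms in auto)
  have lt: "n < b^(2*Suc n) + 1" using a c by linarith
  have kk: "wARH b (b^(2*Suc n)+1) \<and> \<not> MRH b (b^(2*Suc n)+1)"
    by (rule key[OF assms]) simp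
  have "b^(2*Suc n)+1 \<in> {N::nat. wARH b N \<and> \<not> MRH b N}"
    unfolding mem_Collect_eq by (rule kk)
  with n have "b^(2*Suc n)+1 < n" by blast
  with lt show False by (rule less_asym')
qed

end
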